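(* In the CDN routing model described in the context, under any routing policy the number of pending requests at any surrogate server $S_i$ is (almost surely, at all times) bounded by $\lceil\psi\mu_i-1\rceil$.
   Context: A CDN has $m$ surrogate servers $S_1,\dots,S_m$ at fixed points $x_1,\dots,x_m$ of a planar network region $G$ of area $\mathcal{A}$. Requests arrive as a Poisson process of rate $\lambda$ with locations i.i.d. uniform on $G$. Server $S_i$ serves requests first-come-first-served with exponential service times of rate $\mu_i$ and unlimited queue; the system starts empty. There is a fixed latency bound $\psi>0$. If $n_i(t)$ requests are pending at $S_i$ at time $t$, let $A_i(t)=\{x\in G:\|x-x_i\|\le\psi-(n_i(t)+1)/\mu_i\}$ (empty if the radius is negative). A routing policy may send a request arriving at time $t$ from location $x$ only to a server $S_i$ with $x\in A_i(t)$ (the requests it can serve within latency $\psi$), or to no surrogate server. *)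

theory Defs
  imports "HOL-Probability.Probability"
begin

text \<open>Indices of the primitive random variables of the CDN model:
  IA k = k-th interarrival time, LOC k = location of request k,
  SRV i k = service time of request k if it is served by server i.\<close>
datatype cdn_rv = IA nat | LOC nat | SRV nat nat

text \<open>Arrival time of request k (requests numbered 0,1,2,... in arrival order):
  sum of the first k+1 interarrival times (Poisson process started at time 0).\<close>
definition arrival_time :: "(nat \<Rightarrow> real) \<Rightarrow> nat \<Rightarrow> real" where
  "arrival_time E k = (\<Sum>j\<le>k. E j)"

text \<open>Time at which server i has finished all requests among 0..k-1 routed to it
  (FCFS, single server, system initially empty).\<close>
primrec busy_until :: "(nat \<Rightarrow> real) \<Rightarrow> (nat \<Rightarrow> nat option) \<Rightarrow> (nat \<Rightarrow> nat \<Rightarrow> real)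
    \<Rightarrow> nat \<Rightarrow> nat \<Rightarrow> real" where
  "busy_until T r s i 0 = 0"
| "busy_until T r s i (Suc k) =
     (if r k = Some i then max (T k) (busy_until T r s i k) + s i k
      else busy_until T r s i k)"

text \<open>Departure time of request k (requests not routed to a surrogate leave at once).\<close>
definition departure :: "(nat \<Rightarrow> real) \<Rightarrow> (nat \<Rightarrow> nat option) \<Rightarrow> (nat \<Rightarrow> nat \<Rightarrow> real)
    \<Rightarrow> nat \<Rightarrow> real" where
  "departure T r s k = (case r k of None \<Rightarrow> T k
      | Some i \<Rightarrow> max (T k) (busy_until T r s i k) + s i k)"

definition pending :: "(nat \<Rightarrow> real) \<Rightarrow> (nat \<Rightarrow> nat option) \<Rightarrow> (nat \<Rightarrow> nat \<Rightarrow> real)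
    \<Rightarrow> nat \<Rightarrow> real \<Rightarrow> nat" where
  "pending T r s i t = card {k. r k = Some i \<and> T k \<le> t \<and> t < departure T r s k}"

definition pending_before :: "(nat \<Rightarrow> real) \<Rightarrow> (nat \<Rightarrow> nat option) \<Rightarrow> (nat \<Rightarrow> nat \<Rightarrow> real)
    \<Rightarrow> nat \<Rightarrow> nat \<Rightarrow> nat" where
  "pending_before T r s i k = card {j. j < k \<and> r j = Some i \<and> T k < departure T r s j}"

end

theory Submission
  imports Defs
begin

lemma det_bound:
  fixes T :: "nat \<Rightarrow> real" and a :: real
  assumes apos: "0 < a"
    and hk: "\<And>k. r k = Some i \<Longrightarrow> real (pending_before T r s i k) + 1 < a"
  shows "int (pending T r s i t) \<le> \<lceil>a - 1\<rceil>"
proof -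
  define P where "P = {k. r k = Some i \<and> T k \<le> t \<and> t < departure T r s k}"
  have c0: "0 \<le> \<lceil>a - 1\<rceil>" using apos by (smt (verit) ceiling_less_iff of_int_0)
  show ?thesis
  proof (cases "finite P \<and> P \<noteq> {}")
    case False
    then have "card P = 0" by auto
    then show ?thesis using c0 by (simp add: pending_def P_def[symmetric])
  next
    case True
    define k where "k = Max P"
    have kP: "k \<in> P" using True k_def by simp
    have sub: "P - {k} \<subseteq> {j. j < k \<and> r j = Some i \<and> T k < departure T r s j}"
    proof
      fix j assume j: "j \<in> P - {k}"
      have "j \<le> k" using True j k_def by auto
      then have "j < k" using j by auto
      moreover have "T k \<le> t" using kP P_def by auto
      ultimately show "j \<in> {j. j < k \<and> r j = Some i \<and> T k < departure T r s j}"
        using j P_def by auto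
    qed
    have fin: "finite {j. j < k \<and> r j = Some i \<and> T k < departure T r s j}" by simp
    have "card (P - {k}) \<le> pending_before T r s i k"
      unfolding pending_before_def using card_mono[OF fin sub] .
    moreover have "card P = card (P - {k}) + 1" using True kP
      by (metis Suc_eq_plus1 card_Suc_Diff1)
    moreover have "r k = Some i" using kP P_def by auto
    ultimately have "real (card P) < a" using hk[of k] by linarith
    then have "int (card P) \<le> \<lceil>a - 1\<rceil>"
      by (smt (verit, best) ceiling_correct of_int_of_nat_eq le_ceiling_iff)
    then show ?thesis by (simp add: pending_def P_def[symmetric])
  qed
qed

theorem lemma3:
  fixes M :: "'a measure"
    and m :: nat and x :: "nat \<Rightarrow> real^2" and G :: "(real^2) set"
    and lam psi :: real and mu :: "nat \<Rightarrow> real"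
    and E :: "nat \<Rightarrow> 'a \<Rightarrow> real"
    and Y :: "nat \<Rightarrow> 'a \<Rightarrow> real^2"
    and sv :: "nat \<Rightarrow> nat \<Rightarrow> 'a \<Rightarrow> real"
    and r :: "nat \<Rightarrow> 'a \<Rightarrow> nat option"
  assumes "prob_space M"
    and "G \<in> sets lborel" and "0 < emeasure lborel G" and "emeasure lborel G < \<infinity>"
    and "\<And>i. i < m \<Longrightarrow> x i \<in> G"
    and "0 < lam" and "\<And>i. i < m \<Longrightarrow> 0 < mu i" and "0 < psi"
    and "\<And>k. distributed M lborel (E k) (exponential_density lam)"
    and "\<And>k. Y k \<in> borel_measurable M"
    and "\<And>k. distr M lborel (Y k) = uniform_measure lborel G"
    and "\<And>i k. i < m \<Longrightarrow> distributed M lborel (sv i k) (exponential_density (mu i))"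
    and "prob_space.indep_sets M
           (\<lambda>j. sets (case j of IA k \<Rightarrow> vimage_algebra (space M) (E k) borel
                           | LOC k \<Rightarrow> vimage_algebra (space M) (Y k) borel
                           | SRV i k \<Rightarrow> vimage_algebra (space M) (sv i k) borel))
           ({IA k | k. True} \<union> {LOC k | k. True} \<union> {SRV i k | i k. i < m})"
    and "\<And>\<omega> k i. \<omega> \<in> space M \<Longrightarrow> r k \<omega> = Some i \<Longrightarrow>
           i < m \<and>
           dist (Y k \<omega>) (x i)
             \<le> psi - (real (pending_before (arrival_time (\<lambda>j. E j \<omega>)) (\<lambda>j. r j \<omega>)
                                 (\<lambda>i' j. sv i' j \<omega>) i k) + 1) / mu i"
  shows "AE \<omega> in M. \<forall>i<m. \<forall>t::real.
           int (pending (arrival_time (\<lambda>j. E j \<omega>)) (\<lambda>j. r j \<omega>) (\<lambda>i' j. sv i' j \<omega>) i t)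
             \<le> \<lceil>psi * mu i - 1\<rceil>"
proof -
  interpret prob_space M by (rule assms(1))
  have Ynot: "AE \<omega> in M. Y k \<omega> \<notin> range x" for k
  proof -
    have cb: "range x \<in> sets borel"
      by (simp add: sets.countable)
    have N: "{\<omega>\<in>space M. Y k \<omega> \<in> range x} \<in> sets M"
      using measurable_sets[OF assms(10)[of k] cb] by (simp add: vimage_def Int_def conj_commute)
    have "emeasure M {\<omega>\<in>space M. Y k \<omega> \<in> range x} = emeasure (distr M lborel (Y k)) (range x)"
      using emeasure_distr[of "Y k" M lborel "range x"] assms(10)[of k] cb
      by (simp add: vimage_def Int_def conj_commute)
    also have "\<dots> = emeasure lborel (G \<inter> range x) / emeasure lborel G"
      using assms(11)[of k] assms(2) cb by simp
    also have "emeasure lborel (G \<inter> range x) = 0"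
      using countable_imp_null_set_lborel[of "G \<inter> range x"] by auto
    finally have "emeasure M {\<omega>\<in>space M. Y k \<omega> \<in> range x} = 0" by simp
    then show ?thesis using AE_iff_measurable[OF N] by auto
  qed
  then have "AE \<omega> in M. \<forall>k. Y k \<omega> \<notin> range x" by (simp add: AE_all_countable)
  moreover have "AE \<omega> in M. \<omega> \<in> space M" by simp
  ultimately show ?thesis
  proof eventually_elim
    case (elim \<omega>)
    show ?case
    proof (intro allI impI)
      fix i t assume im: "i < m"
      have mup: "0 < mu i" using assms(7) im .
      show "int (pending (arrival_time (\<lambda>j. E j \<omega>)) (\<lambda>j. r j \<omega>) (\<lambda>i' j. sv i' j \<omega>) i t)
             \<le> \<lceil>psi * mu i - 1\<rceil>"
      proof (rule det_bound)
        show "0 < psi * mu i" using mup assms(8) by simp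
      next
        fix k assume rk: "r k \<omega> = Some i"
        have h: "dist (Y k \<omega>) (x i)
             \<le> psi - (real (pending_before (arrival_time (\<lambda>j. E j \<omega>)) (\<lambda>j. r j \<omega>)
                                 (\<lambda>i' j. sv i' j \<omega>) i k) + 1) / mu i"
          using assms(14)[OF elim(2) rk] by simp
        have "Y k \<omega> \<noteq> x i" using elim(1) by auto
        then have "0 < dist (Y k \<omega>) (x i)" by simp
        with h have "(real (pending_before (arrival_time (\<lambda>j. E j \<omega>)) (\<lambda>j. r j \<omega>)
                                 (\<lambda>i' j. sv i' j \<omega>) i k) + 1) / mu i < psi" by linarith
        then show "real (pending_before (arrival_time (\<lambda>j. E j \<omega>)) (\<lambda>j. r j \<omega>)
                                 (\<lambda>i' j. sv i' j \<omega>) i k) + 1 < psi * mu i"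
          using mup by (simp add: divide_less_eq)
      qed
    qed
  qed
qed

end
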